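(* Let $N\geq1$ and $\varepsilon>0$. Let $a\in C(\mathbb{R}^N)$ and let $J\in L^1(\mathbb{R}^N)$ be nonnegative, radially symmetric, with $\int_{\mathbb{R}^N}J=1$; set $J_\varepsilon(z)=\varepsilon^{-N}J(z/\varepsilon)$. Suppose $u_\varepsilon\in L^\infty(\mathbb{R}^N)$ is nonnegative, not a.e. zero, and satisfies $$J_\varepsilon\ast u_\varepsilon-u_\varepsilon+u_\varepsilon(a-u_\varepsilon)=0\quad\text{a.e. in }\mathbb{R}^N.$$ Then $u_\varepsilon(x)>(a(x)-1)^+$ for a.e. $x\in\mathbb{R}^N$.
   Context: $(J_\varepsilon\ast u)(x)=\int_{\mathbb{R}^N}J_\varepsilon(x-y)u(y)\,\mathrm{d}y$; $f^+=\max\{0,f\}$. (This is the case $m=0$ of the equation $\varepsilon^{-m}(J_\varepsilon\ast u-u)+u(a-u)=0$.) *)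

theory Defs
  imports "HOL-Analysis.Analysis"
begin

definition rescaled_kernel :: "real \<Rightarrow> ('a::euclidean_space \<Rightarrow> real) \<Rightarrow> 'a \<Rightarrow> real" where
  "rescaled_kernel \<epsilon> J z = J ((1 / \<epsilon>) *\<^sub>R z) / \<epsilon> ^ DIM('a)"

definition conv :: "('a::euclidean_space \<Rightarrow> real) \<Rightarrow> ('a \<Rightarrow> real) \<Rightarrow> 'a \<Rightarrow> real" where
  "conv J u x = (LINT y|lebesgue. J (x - y) * u y)"

end

theory Submission imports Defs begin

lemma emeasure_affine_preimage:
  fixes t :: "'a::euclidean_space" and c :: real
  assumes c: "c \<noteq> 0" and N: "N \<in> sets lborel"
  shows "emeasure lborel N = ennreal (\<bar>c\<bar>^DIM('a)) * emeasure lborel ((\<lambda>x. t + c *\<^sub>R x) -` N)"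
proof -
  have eq: "lborel = density (distr lborel borel (\<lambda>x. t + c *\<^sub>R x)) (\<lambda>_. \<bar>c\<bar>^DIM('a))"
    by (rule lborel_affine[OF c])
  have "emeasure lborel N = emeasure (density (distr lborel borel (\<lambda>x. t + c *\<^sub>R x)) (\<lambda>_. \<bar>c\<bar>^DIM('a))) N"
    using eq by metis
  also have "\<dots> = ennreal (\<bar>c\<bar>^DIM('a)) * emeasure lborel ((\<lambda>x. t + c *\<^sub>R x) -` N)"
    using N by (simp add: emeasure_density emeasure_distr nn_integral_cmult_indicator)
  finally show ?thesis .
qed

lemma AE_affine:
  fixes t :: "'a::euclidean_space" and c :: real
  assumes c: "c \<noteq> 0" and ae: "AE x in lborel. P x"
  shows "AE x in lborel. P (t + c *\<^sub>R x)"
proof -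
  obtain N where N: "N \<in> null_sets lborel" "{x. \<not> P x} \<subseteq> N"
    using ae unfolding eventually_ae_filter by auto
  have Ns: "N \<in> sets lborel" using N by auto
  have m: "(\<lambda>x. t + c *\<^sub>R x) -` N \<in> sets lborel"
  proof -
    have "(\<lambda>x. t + c *\<^sub>R x) \<in> lborel \<rightarrow>\<^sub>M lborel" by simp
    from measurable_sets[OF this Ns] show ?thesis by simp
  qed
  have "emeasure lborel N = ennreal (\<bar>c\<bar>^DIM('a)) * emeasure lborel ((\<lambda>x. t + c *\<^sub>R x) -` N)"
    by (rule emeasure_affine_preimage[OF c Ns])
  then have "emeasure lborel ((\<lambda>x. t + c *\<^sub>R x) -` N) = 0"
    using N c by (simp add: null_sets_def)
  then have "(\<lambda>x. t + c *\<^sub>R x) -` N \<in> null_sets lborel" using m by auto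
  then show ?thesis
    by (rule AE_I') (use N in auto)
qed

lemma nn_integral_affine:
  fixes t :: "'a::euclidean_space" and c :: real
  assumes c: "c \<noteq> 0" and f[measurable]: "f \<in> borel_measurable borel"
  shows "(\<integral>\<^sup>+x. f x \<partial>lborel) = ennreal (\<bar>c\<bar>^DIM('a)) * (\<integral>\<^sup>+x. f (t + c *\<^sub>R x) \<partial>lborel)"
proof -
  have eq: "lborel = density (distr lborel borel (\<lambda>x. t + c *\<^sub>R x)) (\<lambda>_. \<bar>c\<bar>^DIM('a))"
    by (rule lborel_affine[OF c])
  have "(\<integral>\<^sup>+x. f x \<partial>lborel) = (\<integral>\<^sup>+x. f x \<partial>(density (distr lborel borel (\<lambda>x. t + c *\<^sub>R x)) (\<lambda>_. \<bar>c\<bar>^DIM('a))))"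
    using eq by metis
  also have "\<dots> = ennreal (\<bar>c\<bar>^DIM('a)) * (\<integral>\<^sup>+x. f (t + c *\<^sub>R x) \<partial>lborel)"
    by (simp add: nn_integral_density nn_integral_distr nn_integral_cmult)
  finally show ?thesis .
qed

lemma integrable_affine:
  fixes t :: "'a::euclidean_space" and c :: real and f :: "'a \<Rightarrow> real"
  assumes c: "c \<noteq> 0" and f: "integrable lborel f"
  shows "integrable lborel (\<lambda>x. f (t + c *\<^sub>R x))"
proof -
  have fm[measurable]: "f \<in> borel_measurable borel" using f by auto
  have "(\<integral>\<^sup>+x. ennreal (norm (f x)) \<partial>lborel) < \<infinity>" using f by (auto simp: integrable_iff_bounded)
  moreover have "(\<integral>\<^sup>+x. ennreal (norm (f x)) \<partial>lborel) = ennreal (\<bar>c\<bar>^DIM('a)) * (\<integral>\<^sup>+x. ennreal (norm (f (t + c *\<^sub>R x))) \<partial>lborel)"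
    by (rule nn_integral_affine[OF c]) measurable
  ultimately have "(\<integral>\<^sup>+x. ennreal (norm (f (t + c *\<^sub>R x))) \<partial>lborel) < \<infinity>"
    using c by (auto simp: ennreal_mult_less_top top_unique)
  then show ?thesis by (auto simp: integrable_iff_bounded)
qed

lemma steinhaus:
  fixes E :: "'a::euclidean_space set"
  assumes Es: "E \<in> sets lborel" and Eb: "E \<subseteq> ball 0 R" and Ep: "emeasure lborel E > 0"
  shows "\<exists>r>0. \<forall>v. norm v < r \<longrightarrow> (\<exists>e1\<in>E. \<exists>e2\<in>E. v = e1 - e2)"
proof -
  have "emeasure lborel E \<le> emeasure lborel (ball (0::'a) R)"
    using Es Eb by (intro emeasure_mono) auto
  then have Efin: "emeasure lborel E < \<infinity>" using emeasure_lborel_ball_finite[of 0 R]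
    by (meson order.strict_trans1)
  have Esl: "E \<in> sets lebesgue" using Es by auto
  have El: "E \<in> lmeasurable"
    using Efin Es by (auto simp: fmeasurable_def)
  define m where "m = measure lebesgue E"
  have "emeasure lebesgue E = emeasure lborel E" using Es by simp
  then have mpos: "m > 0" using Ep El unfolding m_def
    by (metis emeasure_eq_measure2 ennreal_less_zero_iff)
  obtain U where U: "open U" "E \<subseteq> U" "U - E \<in> lmeasurable" "emeasure lebesgue (U - E) < ennreal (m/3)"
    using sets_lebesgue_outer_open[OF Esl, of "m/3"] mpos by auto
  obtain F where F: "closed F" "F \<subseteq> E" "E - F \<in> lmeasurable" "emeasure lebesgue (E - F) < ennreal (m/3)"
    using sets_lebesgue_inner_closed[OF Esl, of "m/3"] mpos by auto
  have UE: "measure lebesgue (U - E) < m/3"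
    using U(3,4) mpos by (simp add: emeasure_eq_measure2 ennreal_less_iff)
  have EF: "measure lebesgue (E - F) < m/3"
    using F(3,4) mpos by (simp add: emeasure_eq_measure2 ennreal_less_iff)
  have Fc: "compact F"
    using F(1,2) Eb by (meson bounded_ball bounded_subset compact_eq_bounded_closed)
  have Fl: "F \<in> lmeasurable" using Fc by (rule lmeasurable_compact)
  have "measure lebesgue E \<le> measure lebesgue F + measure lebesgue (E - F)"
  proof -
    have "E = F \<union> (E - F)" using F(2) by auto
    then have "measure lebesgue E = measure lebesgue (F \<union> (E - F))" by simp
    also have "\<dots> \<le> measure lebesgue F + measure lebesgue (E - F)"
      using Fl F(3) by (intro measure_Un_le) auto
    finally show ?thesis .
  qed
  then have mF: "measure lebesgue F > 2*m/3" using EF unfolding m_def by linarith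
  obtain r where r: "r > 0" "(\<Union>x\<in>F. ball x r) \<subseteq> U"
    using compact_subset_open_imp_ball_epsilon_subset[OF Fc U(1)] F(2) U(2) by blast
  show ?thesis
  proof (intro exI[of _ r] conjI allI impI r(1))
    fix v :: 'a assume v: "norm v < r"
    show "\<exists>e1\<in>E. \<exists>e2\<in>E. v = e1 - e2"
    proof (rule ccontr)
      assume no: "\<not> ?thesis"
      have sub: "(+) v ` F \<subseteq> U - E"
      proof
        fix y assume "y \<in> (+) v ` F"
        then obtain f where f: "f \<in> F" "y = v + f" by auto
        have "y \<in> ball f r" using f v by (simp add: dist_norm)
        then have "y \<in> U" using r(2) f(1) by blast
        moreover have "y \<notin> E"
        proof
          assume "y \<in> E"
          then show False using no f F(2) by (metis add_diff_cancel_right' subsetD)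
        qed
        ultimately show "y \<in> U - E" by simp
      qed
      have "(+) v ` F \<in> lmeasurable" using Fl by (rule measurable_translation)
      then have "measure lebesgue ((+) v ` F) \<le> measure lebesgue (U - E)"
        using sub U(3) by (intro measure_mono_fmeasurable) auto
      then have "measure lebesgue F \<le> measure lebesgue (U - E)"
        by (simp add: measure_translation)
      then show False using UE mF mpos by linarith
    qed
  qed
qed

definition Ginv :: "('a::euclidean_space \<Rightarrow> bool) \<Rightarrow> 'a \<Rightarrow> bool" where
  "Ginv Z z = (AE x in lborel. (Z x \<longleftrightarrow> Z (x - z)))"

lemma Ginv_add:
  assumes s: "Ginv Z s" and t: "Ginv Z t"
  shows "Ginv Z (s + t)"
proof -
  have "AE x in lborel. (Z (-s + 1 *\<^sub>R x) \<longleftrightarrow> Z (-s + 1 *\<^sub>R x - t))"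
    using AE_affine[OF _ t[unfolded Ginv_def], of 1 "-s"] by simp
  then have "AE x in lborel. (Z (x - s) \<longleftrightarrow> Z (x - (s + t)))"
    by (simp add: algebra_simps)
  with s show ?thesis unfolding Ginv_def by (auto elim: AE_mp)
qed

lemma Ginv_neg:
  assumes t: "Ginv Z t"
  shows "Ginv Z (- t)"
proof -
  have "AE x in lborel. (Z (t + 1 *\<^sub>R x) \<longleftrightarrow> Z (t + 1 *\<^sub>R x - t))"
    using AE_affine[OF _ t[unfolded Ginv_def], of 1 t] by simp
  then show ?thesis unfolding Ginv_def by (simp add: algebra_simps) (auto elim: AE_mp)
qed

lemma Ginv_zero: "Ginv Z 0"
  unfolding Ginv_def by simp

lemma Ginv_mult:
  assumes "Ginv Z t" shows "Ginv Z (real n *\<^sub>R t)"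
proof (induction n)
  case 0 then show ?case by (simp add: Ginv_zero)
next
  case (Suc n)
  have "Ginv Z (real n *\<^sub>R t + t)" using Ginv_add[OF Suc assms] .
  then show ?case by (simp add: algebra_simps)
qed

lemma Ginv_all:
  assumes r: "r > 0" and loc: "\<And>v. norm v < r \<Longrightarrow> Ginv Z v"
  shows "Ginv Z v"
proof -
  obtain n :: nat where n: "norm v / r < real n" using reals_Archimedean2 by blast
  then have npos: "real n > 0" using r by (smt (verit) divide_nonneg_pos norm_ge_zero)
  have "norm ((1 / real n) *\<^sub>R v) = norm v / real n" using npos by simp
  also have "\<dots> < r" using n npos r by (simp add: divide_less_eq mult.commute pos_divide_less_eq)
  finally have "Ginv Z ((1 / real n) *\<^sub>R v)" by (rule loc)
  from Ginv_mult[OF this, of n] show ?thesis using npos by simp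
qed

lemma AE_lborel_ex:
  assumes "AE x in (lborel::'a::euclidean_space measure). P x" shows "\<exists>x. P x"
proof (rule ccontr)
  assume "\<not> (\<exists>x. P x)"
  with assms obtain N where N: "UNIV \<subseteq> N" "emeasure (lborel::'a measure) N = 0" "N \<in> sets lborel"
    by (auto elim!: AE_E)
  then have "N = UNIV" by auto
  with N(2) show False by simp
qed

lemma AE_shift:
  fixes x :: "'a::euclidean_space"
  assumes "AE y in lborel. P y" shows "AE z in lborel. P (x - z)"
proof -
  have "AE z in lborel. P (x + (-1) *\<^sub>R z)" by (rule AE_affine[OF _ assms]) auto
  then show ?thesis by simp
qed

theorem lemma2p2:
  fixes J u a :: "'a::euclidean_space \<Rightarrow> real" and \<epsilon> :: real
  assumes eps: "\<epsilon> > 0"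
    and a_cont: "continuous_on UNIV a"
    and J_int: "integrable lebesgue J"
    and J_nonneg: "\<And>z. J z \<ge> 0"
    and J_radial: "\<And>z w. norm z = norm w \<Longrightarrow> J z = J w"
    and J_mass: "(LINT z|lebesgue. J z) = 1"
    and u_meas: "u \<in> borel_measurable lebesgue"
    and u_bdd: "\<exists>C. AE x in lebesgue. \<bar>u x\<bar> \<le> C"
    and u_nonneg: "AE x in lebesgue. u x \<ge> 0"
    and u_nonzero: "\<not> (AE x in lebesgue. u x = 0)"
    and u_eq: "AE x in lebesgue.
                 conv (rescaled_kernel \<epsilon> J) u x - u x + u x * (a x - u x) = 0"
  shows "AE x in lebesgue. u x > max 0 (a x - 1)"
proof -
  have J_meas: "J \<in> borel_measurable lebesgue" using J_int by auto
  obtain j0 where j0: "j0 \<in> borel_measurable lborel" "AE x in lborel. J x = j0 x"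
    using completion_ex_borel_measurable_real[OF J_meas] by blast
  define j where "j x = max 0 (j0 x)" for x
  have j_meas[measurable]: "j \<in> borel_measurable borel"
    using j0(1) unfolding j_def by (simp add: measurable_lborel1 del: measurable_lborel1 ) 
  have jJ: "AE x in lborel. J x = j x"
    using j0(2) unfolding j_def by eventually_elim (metis J_nonneg max.absorb2)
  have j_nonneg: "j x \<ge> 0" for x unfolding j_def by simp
  have j_int: "integrable lborel j"
  proof -
    have "integrable lebesgue j"
      using J_int by (rule integrable_cong_AE_imp) (use jJ in \<open>auto intro: AE_completion measurable_completion\<close>)
    then show ?thesis by (subst (asm) integrable_completion) auto
  qed
  have j_pos: "\<not> (AE y in lborel. j y = 0)"
  proof
    assume "AE y in lborel. j y = 0"
    then have "AE y in lebesgue. J y = 0" using jJ by (intro AE_completion) (auto elim: AE_mp)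
    then have "(LINT z|lebesgue. J z) = (LINT z|lebesgue. 0)"
      using J_meas integral_cong_AE[of J lebesgue "\<lambda>_. 0"] by auto
    with J_mass show False by simp
  qed
  have j_sym: "AE y in lborel. j (- y) = j y"
  proof -
    have "AE y in lborel. J (0 + (-1) *\<^sub>R y) = j (0 + (-1) *\<^sub>R y)"
      by (rule AE_affine) (use jJ in auto)
    with jJ show ?thesis using J_radial[of "-_" "_"] by (auto elim: AE_mp)
  qed
  define k where "k z = j ((1 / \<epsilon>) *\<^sub>R z) / \<epsilon> ^ DIM('a)" for z
  have k_meas[measurable]: "k \<in> borel_measurable borel" unfolding k_def by measurable
  have k_nonneg: "k z \<ge> 0" for z unfolding k_def using j_nonneg eps by simp
  have k_int: "integrable lborel k"
  proof -
    have "integrable lborel (\<lambda>z. j (0 + (1 / \<epsilon>) *\<^sub>R z))"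
      by (rule integrable_affine[OF _ j_int]) (use eps in auto)
    then show ?thesis unfolding k_def by simp
  qed
  have k_sym: "AE z in lborel. k (- z) = k z"
  proof -
    have "AE z in lborel. j (- (0 + (1 / \<epsilon>) *\<^sub>R z)) = j (0 + (1 / \<epsilon>) *\<^sub>R z)"
      by (rule AE_affine[OF _ j_sym]) (use eps in auto)
    then show ?thesis unfolding k_def by simp
  qed
  have k_pos: "\<not> (AE z in lborel. k z = 0)"
  proof
    assume "AE z in lborel. k z = 0"
    then have "AE z in lborel. j ((1 / \<epsilon>) *\<^sub>R z) = 0" unfolding k_def using eps by simp
    then have "AE y in lborel. j ((1 / \<epsilon>) *\<^sub>R (0 + \<epsilon> *\<^sub>R y)) = 0"
      by (rule AE_affine[rotated]) (use eps in auto)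
    then have "AE y in lborel. j y = 0" using eps by simp
    with j_pos show False by simp
  qed
  have u_meas': "u \<in> borel_measurable (completion lborel)" using u_meas .
  obtain u0 where u0: "u0 \<in> borel_measurable lborel" "AE x in lborel. u x = u0 x"
    using completion_ex_borel_measurable_real[OF u_meas'] by blast
  obtain C0 where C0: "AE x in lebesgue. \<bar>u x\<bar> \<le> C0" using u_bdd by blast
  define C where "C = max 0 C0"
  define v where "v x = max 0 (min C (u0 x))" for x
  have v_meas[measurable]: "v \<in> borel_measurable borel"
    using u0(1) unfolding v_def by (simp add: measurable_lborel1 del: measurable_lborel1)
  have v_nonneg: "v x \<ge> 0" for x unfolding v_def by simp
  have C_nonneg: "C \<ge> 0" unfolding C_def by simp
  have v_le: "v x \<le> C" for x unfolding v_def C_def by simp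
  have uv: "AE x in lborel. u x = v x"
  proof -
    have "AE x in lborel. \<bar>u x\<bar> \<le> C0" using C0 by (simp add: AE_completion_iff)
    moreover have "AE x in lborel. u x \<ge> 0" using u_nonneg by (simp add: AE_completion_iff)
    ultimately show ?thesis using u0(2) unfolding v_def C_def by eventually_elim auto
  qed
  define w where "w x = (\<integral>y. k (x - y) * v y \<partial>lborel)" for x
  have w_int: "integrable lborel (\<lambda>y. k (x - y) * v y)" for x
  proof -
    have "integrable lborel (\<lambda>y. k (x + (-1) *\<^sub>R y))" by (rule integrable_affine[OF _ k_int]) auto
    then have "integrable lborel (\<lambda>y. C * k (x - y))" by simp
    then show ?thesis
      by (rule Bochner_Integration.integrable_bound) (use k_nonneg v_nonneg v_le C_nonneg in \<open>auto intro!: AE_I2 mult_right_mono simp: abs_mult mult.commute\<close>)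
  qed
  have w_nonneg: "w x \<ge> 0" for x unfolding w_def using k_nonneg v_nonneg by (simp add: Bochner_Integration.integral_nonneg)
  have w_zero: "AE y in lborel. k (x - y) * v y = 0" if "w x = 0" for x
    using that unfolding w_def using integral_nonneg_eq_0_iff_AE[OF w_int[of x]] k_nonneg v_nonneg by auto
  have conv_eq: "conv (rescaled_kernel \<epsilon> J) u x = w x" for x
  proof -
    have "AE y in lborel. J ((1 / \<epsilon>) *\<^sub>R x + (- 1 / \<epsilon>) *\<^sub>R y) = j ((1 / \<epsilon>) *\<^sub>R x + (- 1 / \<epsilon>) *\<^sub>R y)"
      by (rule AE_affine[OF _ jJ]) (use eps in auto)
    moreover have "(1 / \<epsilon>) *\<^sub>R x + (- 1 / \<epsilon>) *\<^sub>R y = (1 / \<epsilon>) *\<^sub>R (x - y)" for y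
      by (simp add: scaleR_diff_right)
    ultimately have "AE y in lborel. J ((1 / \<epsilon>) *\<^sub>R (x - y)) = j ((1 / \<epsilon>) *\<^sub>R (x - y))" by simp
    then have ae: "AE y in lebesgue. k (x - y) * v y = rescaled_kernel \<epsilon> J (x - y) * u y"
    proof (intro AE_completion)
      show "AE y in lborel. k (x - y) * v y = rescaled_kernel \<epsilon> J (x - y) * u y"
        using uv \<open>AE y in lborel. J ((1 / \<epsilon>) *\<^sub>R (x - y)) = j ((1 / \<epsilon>) *\<^sub>R (x - y))\<close>
        by eventually_elim (simp add: k_def rescaled_kernel_def)
    qed
    have m1: "(\<lambda>y. k (x - y) * v y) \<in> borel_measurable lebesgue"
      by (intro measurable_completion) measurable
    then have m2: "(\<lambda>y. rescaled_kernel \<epsilon> J (x - y) * u y) \<in> borel_measurable lebesgue"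
      using ae by (rule borel_measurable_AE)
    have "conv (rescaled_kernel \<epsilon> J) u x = (LINT y|lebesgue. k (x - y) * v y)"
      unfolding conv_def by (rule integral_cong_AE[OF m2 m1]) (use ae in \<open>eventually_elim, simp\<close>)
    also have "\<dots> = w x" unfolding w_def by (rule integral_completion) measurable
    finally show ?thesis .
  qed
  have eq_lb: "AE x in lborel. w x - v x + v x * (a x - v x) = 0"
    using u_eq uv unfolding AE_completion_iff by eventually_elim (simp add: conv_eq)
  have stepA: "AE x in lborel. AE y in lborel. (v x = 0 \<longrightarrow> k (x - y) * v y = 0)"
    using eq_lb
  proof eventually_elim
    case (elim x)
    show ?case
    proof (cases "v x = 0")
      case True
      then have "w x = 0" using elim by simp
      from w_zero[OF this] show ?thesis by (auto elim: AE_mp)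
    qed simp
  qed
  have stepB: "AE y in lborel. AE x in lborel. (v x = 0 \<longrightarrow> k (x - y) * v y = 0)"
    using stepA by (subst (asm) lborel_pair.AE_commute) measurable
  have stepC: "AE x in lborel. AE y in lborel. (k (x - y) > 0 \<longrightarrow> (v x = 0 \<longleftrightarrow> v y = 0))"
    using stepA stepB
  proof eventually_elim
    case (elim x)
    have "AE y in lborel. k (- (x - y)) = k (x - y)"
      using AE_shift[OF k_sym, of x] .
    then have sym: "AE y in lborel. k (y - x) = k (x - y)" by simp
    show ?case using elim sym
    proof eventually_elim
      case (elim y)
      then show ?case using v_nonneg by auto
    qed
  qed
  have stepD: "AE x in lborel. AE z in lborel. (k z > 0 \<longrightarrow> (v x = 0 \<longleftrightarrow> v (x - z) = 0))"
    using stepC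
  proof eventually_elim
    case (elim x)
    from AE_shift[OF elim, of x] show ?case by simp
  qed
  have stepE: "AE z in lborel. AE x in lborel. (k z > 0 \<longrightarrow> (v x = 0 \<longleftrightarrow> v (x - z) = 0))"
    using stepD by (subst (asm) lborel_pair.AE_commute) measurable
  define Z where "Z x = (v x = 0)" for x
  have stepF: "AE z in lborel. k z > 0 \<longrightarrow> Ginv Z z"
    using stepE unfolding Ginv_def Z_def by eventually_elim auto
  obtain N where N: "N \<in> null_sets lborel" "{z \<in> space lborel. \<not> (k z > 0 \<longrightarrow> Ginv Z z)} \<subseteq> N"
    using stepF unfolding eventually_ae_filter by blast
  define T0 where "T0 = {z. k z > 0} - N"
  have "{z. k z > 0} \<in> sets borel" by measurable
  then have T0s: "T0 \<in> sets lborel" unfolding T0_def using N(1) by (intro sets.Diff) auto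
  have T0G: "Ginv Z z" if "z \<in> T0" for z using that N(2) unfolding T0_def by auto
  have T0pos: "emeasure lborel T0 \<noteq> 0"
  proof
    assume "emeasure lborel T0 = 0"
    then have "T0 \<in> null_sets lborel" using T0s by auto
    then have "AE z in lborel. z \<notin> T0" by (rule AE_not_in)
    moreover have "AE z in lborel. z \<notin> N" using N(1) by (rule AE_not_in)
    ultimately have "AE z in lborel. k z = 0"
    proof eventually_elim
      case (elim z)
      then have "\<not> k z > 0" unfolding T0_def by auto
      with k_nonneg[of z] show ?case by simp
    qed
    with k_pos show False by simp
  qed
  obtain n :: nat where n: "emeasure lborel (T0 \<inter> ball 0 (real n)) \<noteq> 0"
  proof (rule ccontr)
    assume "\<not> thesis"
    then have "\<And>n::nat. T0 \<inter> ball 0 (real n) \<in> null_sets lborel" using that T0s by (auto simp: null_sets_def)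
    then have "(\<Union>n::nat. T0 \<inter> ball 0 (real n)) \<in> null_sets lborel" by (rule null_sets_UN)
    moreover have "(\<Union>n::nat. T0 \<inter> ball 0 (real n)) = T0"
      by (auto simp: reals_Archimedean2)
    ultimately show False using T0pos by auto
  qed
  obtain r where r: "r > 0" "\<forall>v. norm v < r \<longrightarrow> (\<exists>e1\<in>T0 \<inter> ball 0 (real n). \<exists>e2\<in>T0 \<inter> ball 0 (real n). v = e1 - e2)"
    using steinhaus[of "T0 \<inter> ball 0 (real n)" "real n"] T0s n by (auto simp: zero_less_iff_neq_zero)
  have Gloc: "Ginv Z v" if nv: "norm v < r" for v
  proof -
    obtain e1 e2 where e: "e1 \<in> T0" "e2 \<in> T0" "v = e1 - e2" using r(2) nv by blast
    have "Ginv Z (e1 + - e2)" by (intro Ginv_add Ginv_neg T0G e)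
    then show ?thesis using e(3) by simp
  qed
  have Gall: "Ginv Z z" for z by (rule Ginv_all[OF r(1) Gloc])
  have H1: "AE z in lborel. AE x in lborel. (Z x \<longleftrightarrow> Z (x - z))"
    using Gall unfolding Ginv_def by simp
  have H2: "AE x in lborel. AE z in lborel. (Z x \<longleftrightarrow> Z (x - z))"
    using H1 unfolding Z_def by (subst lborel_pair.AE_commute) measurable
  have H3: "AE x in lborel. AE y in lborel. (Z x \<longleftrightarrow> Z y)"
    using H2
  proof eventually_elim
    case (elim x)
    from AE_shift[OF elim, of x] show ?case by simp
  qed
  obtain x0 where x0: "AE y in lborel. (Z x0 \<longleftrightarrow> Z y)"
    using AE_lborel_ex[OF H3] by blast
  show ?thesis
  proof (cases "Z x0")
    case True
    then have "AE y in lborel. v y = 0" using x0 unfolding Z_def by simp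
    then have "AE y in lebesgue. u y = 0" using uv unfolding AE_completion_iff by eventually_elim simp
    with u_nonzero show ?thesis by simp
  next
    case False
    then have "AE y in lborel. v y \<noteq> 0" using x0 unfolding Z_def by simp
    then have vpos: "AE y in lborel. v y > 0"
      by eventually_elim (metis v_nonneg order_le_less)
    have wpos: "w x > 0" for x
    proof (rule ccontr)
      assume "\<not> w x > 0"
      then have "w x = 0" using w_nonneg[of x] by simp
      from w_zero[OF this] vpos have "AE y in lborel. k (x - y) = 0"
        by eventually_elim simp
      from AE_shift[OF this, of x] have "AE z in lborel. k z = 0" by simp
      with k_pos show False by simp
    qed
    have "AE x in lborel. u x > max 0 (a x - 1)"
      using eq_lb uv vpos
    proof eventually_elim
      case (elim x)
      have "v x * (1 - a x + v x) = w x" using elim(1) by (simp add: algebra_simps)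
      then have "v x * (1 - a x + v x) > 0" using wpos[of x] by simp
      then have "1 - a x + v x > 0" using elim(3) by (simp add: zero_less_mult_iff)
      then show ?case using elim(2,3) by simp
    qed
    then show ?thesis unfolding AE_completion_iff .
  qed
qed
end
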